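(* Let $\alpha,\beta,\gamma\in\mathbb{Z}[i]$ satisfy $\alpha^2+i\beta^2+\gamma^2=0$, $\alpha\beta\gamma\neq0$ and $\gcd(\alpha,\beta,\gamma)\in U$. Then $\alpha\beta\gamma\equiv0\pmod{1+i}$.
   Context: $\mathbb{Z}[i]$ is the ring of Gaussian integers, $U=\{1,-1,i,-i\}$ its unit group; $\gcd(\alpha,\beta,\gamma)\in U$ means no common non-unit divisor. *)

theory Defs
  imports Complex_Main
begin

definition gauss_ints :: "complex set" where
  "gauss_ints = {z. Re z \<in> \<int> \<and> Im z \<in> \<int>}"

definition gdvd :: "complex \<Rightarrow> complex \<Rightarrow> bool" where
  "gdvd a b \<longleftrightarrow> (\<exists>c \<in> gauss_ints. b = a * c)"

definition gauss_units :: "complex set" where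
  "gauss_units = {1, -1, \<i>, -\<i>}"

definition gauss_coprime3 :: "complex \<Rightarrow> complex \<Rightarrow> complex \<Rightarrow> bool" where
  "gauss_coprime3 a b c \<longleftrightarrow>
     (\<forall>d \<in> gauss_ints. gdvd d a \<and> gdvd d b \<and> gdvd d c \<longrightarrow> d \<in> gauss_units)"

end

theory Submission
  imports Defs
begin

lemma gi_obtain:
  assumes "z \<in> gauss_ints"
  obtains a b :: int where "z = Complex (of_int a) (of_int b)"
proof -
  from assms obtain a where a: "Re z = of_int a" unfolding gauss_ints_def by (auto elim: Ints_cases)
  from assms obtain b where b: "Im z = of_int b" unfolding gauss_ints_def by (auto elim: Ints_cases)
  have "z = Complex (of_int a) (of_int b)" using a b by (simp add: complex_eq_iff)
  then show ?thesis using that by blast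
qed

lemma gi_mult: "x \<in> gauss_ints \<Longrightarrow> y \<in> gauss_ints \<Longrightarrow> x * y \<in> gauss_ints"
  unfolding gauss_ints_def by auto

lemma par: "even (a^2 - b^2 + 2*a*b) \<longleftrightarrow> even ((a::int)+b)"
  by (auto simp: power2_eq_square even_add even_mult_iff)

lemma par2: "even (- 2*c*d + (c^2 - d^2)) \<longleftrightarrow> even ((c::int)+d)"
  by (auto simp: power2_eq_square even_add even_mult_iff)

lemma sum3_even: "(x::int) + y + z = 0 \<Longrightarrow> even x = P \<Longrightarrow> even y = Q \<Longrightarrow> even z = R \<Longrightarrow> P \<or> Q \<or> R"
proof (rule ccontr)
  assume h: "x + y + z = 0" "even x = P" "even y = Q" "even z = R" "\<not> (P \<or> Q \<or> R)"
  then have "odd x" "odd y" "odd z" by auto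
  then have "odd (x + y + z)" by simp
  then show False using h(1) by simp
qed

lemma dvd_even:
  assumes "even (a + b)"
  shows "gdvd (1 + \<i>) (Complex (of_int a) (of_int b))"
proof -
  obtain k where k: "a + b = 2 * k" using assms by blast
  define w where "w = Complex (of_int k) (of_int (k - a))"
  have "w \<in> gauss_ints" unfolding w_def gauss_ints_def by simp
  moreover have "Complex (of_int a) (of_int b) = (1 + \<i>) * w"
    unfolding w_def using k by (simp add: complex_eq_iff algebra_simps, linarith?)
  ultimately show ?thesis unfolding gdvd_def by blast
qed

lemma dvd_prod:
  assumes "gdvd (1 + \<i>) x" "y \<in> gauss_ints"
  shows "gdvd (1 + \<i>) (x * y)"
proof -
  from assms obtain c where "c \<in> gauss_ints" "x = (1 + \<i>) * c" unfolding gdvd_def by blast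
  then show ?thesis unfolding gdvd_def using assms(2) gi_mult
    by (metis mult.assoc)
qed

theorem lemma4p5:
  fixes \<alpha> \<beta> \<gamma> :: complex
  assumes "\<alpha> \<in> gauss_ints" and "\<beta> \<in> gauss_ints" and "\<gamma> \<in> gauss_ints"
    and "\<alpha>\<^sup>2 + \<i> * \<beta>\<^sup>2 + \<gamma>\<^sup>2 = 0"
    and "\<alpha> * \<beta> * \<gamma> \<noteq> 0"
    and "gauss_coprime3 \<alpha> \<beta> \<gamma>"
  shows "gdvd (1 + \<i>) (\<alpha> * \<beta> * \<gamma>)"
proof -
  obtain a b where A: "\<alpha> = Complex (of_int a) (of_int b)" using assms(1) gi_obtain by blast
  obtain c d where B: "\<beta> = Complex (of_int c) (of_int d)" using assms(2) gi_obtain by blast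
  obtain e f where C: "\<gamma> = Complex (of_int e) (of_int f)" using assms(3) gi_obtain by blast
  have re: "Re (\<alpha>\<^sup>2 + \<i> * \<beta>\<^sup>2 + \<gamma>\<^sup>2) + Im (\<alpha>\<^sup>2 + \<i> * \<beta>\<^sup>2 + \<gamma>\<^sup>2) = 0"
    using assms(4) by simp
  hence "real_of_int ((a^2 - b^2 + 2*a*b) + (- 2*c*d + (c^2 - d^2)) + (e^2 - f^2 + 2*e*f)) = 0"
    unfolding A B C by (simp add: power2_eq_square algebra_simps)
  hence "(a^2 - b^2 + 2*a*b) + (- 2*c*d + (c^2 - d^2)) + (e^2 - f^2 + 2*e*f) = 0"
    by linarith
  hence "even (a+b) \<or> even (c+d) \<or> even (e+f)"
    using par[of a b] par2[of c d] par[of e f] sum3_even by blast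
  then show ?thesis
  proof (elim disjE)
    assume "even (a+b)"
    then have "gdvd (1+\<i>) \<alpha>" using A dvd_even by simp
    then show ?thesis using dvd_prod gi_mult assms(2,3) by (metis mult.assoc)
  next
    assume "even (c+d)"
    then have "gdvd (1+\<i>) \<beta>" using B dvd_even by simp
    then show ?thesis using dvd_prod gi_mult assms(1,3) by (metis mult.assoc mult.commute)
  next
    assume "even (e+f)"
    then have "gdvd (1+\<i>) \<gamma>" using C dvd_even by simp
    then show ?thesis using dvd_prod gi_mult assms(1,2) by (metis mult.commute)
  qed
qed

end
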